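(* Let $N\cong\mathbb{Z}^3$ and let $P$ be a minimal Fano polytope in $N_\mathbb{R}$ which contains two triangles $T_1,T_2$, whose vertices are vertices of $P$, lying in distinct two-dimensional linear subspaces $L_1\ne L_2$, such that each $T_j$ is equivalent (under an isomorphism of lattices $\mathbb{Z}^2\to N\cap L_j$) to $\mathrm{conv}\{(1,0),(0,1),(-1,-1)\}$. Then, up to the action of $GL(3,\mathbb{Z})$, $P$ is the convex hull of the columns of $$\begin{pmatrix}1&0&0&-1&1\\0&1&0&-1&1\\0&0&-1&0&1\end{pmatrix}.$$
   Context: A Fano polytope is a three-dimensional convex polytope $P\subset N_\mathbb{R}$ with vertices in $N$ such that the origin is the only lattice point in the interior of $P$. It is minimal if, for every vertex $\rho$ of $P$, the polytope $\mathrm{conv}((P\cap N)\setminus\{\rho\})$ is not a Fano polytope. Polytopes are identified up to $GL(3,\mathbb{Z})$ (after choosing a basis of $N$). *)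

theory Defs
  imports "HOL-Analysis.Analysis"
begin

definition lattice_pt :: "real^'n \<Rightarrow> bool" where
  "lattice_pt x \<longleftrightarrow> (\<forall>i. x $ i \<in> \<int>)"

definition fano_polytope :: "(real^3) set \<Rightarrow> bool" where
  "fano_polytope P \<longleftrightarrow>
     polytope P \<and> aff_dim P = 3 \<and>
     (\<forall>v. v extreme_point_of P \<longrightarrow> lattice_pt v) \<and>
     {x \<in> interior P. lattice_pt x} = {0}"

definition minimal_fano :: "(real^3) set \<Rightarrow> bool" where
  "minimal_fano P \<longleftrightarrow> fano_polytope P \<and>
     (\<forall>\<rho>. \<rho> extreme_point_of P \<longrightarrow>
        \<not> fano_polytope (convex hull ({x \<in> P. lattice_pt x} - {\<rho>})))"

definition std_triangle :: "(real^2) set" where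
  "std_triangle = convex hull {vector [1,0], vector [0,1], vector [-1,-1]}"

text \<open>T lies in the 2-dimensional linear subspace L and is the image of the standard
  triangle under (the real extension of) a lattice isomorphism Z^2 \<rightarrow> N \<inter> L.\<close>
definition std_triangle_in :: "(real^3) set \<Rightarrow> (real^3) set \<Rightarrow> bool" where
  "std_triangle_in T L \<longleftrightarrow>
     subspace L \<and> dim L = 2 \<and> T \<subseteq> L \<and>
     (\<exists>f :: real^2 \<Rightarrow> real^3. linear f \<and> inj f \<and> f ` UNIV = L \<and>
        f ` {y. lattice_pt y} = {x \<in> L. lattice_pt x} \<and>
        f ` std_triangle = T)"

definition GL3Z :: "real^3^3 \<Rightarrow> bool" where
  "GL3Z M \<longleftrightarrow> (\<forall>i j. M $ i $ j \<in> \<int>) \<and> \<bar>det M\<bar> = 1"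

definition P_model :: "(real^3) set" where
  "P_model = convex hull {vector [1,0,0], vector [0,1,0], vector [0,0,-1],
                          vector [-1,-1,0], vector [1,1,1]}"

end

theory Submission
  imports Defs
begin

lemma lat_add: "lattice_pt x \<Longrightarrow> lattice_pt y \<Longrightarrow> lattice_pt (x + y)"
  by (simp add: lattice_pt_def)
lemma lat_neg: "lattice_pt x \<Longrightarrow> lattice_pt (- x)"
  by (simp add: lattice_pt_def)
lemma lat_diff: "lattice_pt x \<Longrightarrow> lattice_pt y \<Longrightarrow> lattice_pt (x - y)"
  by (simp add: lattice_pt_def)
lemma lat_scale: "k \<in> \<int> \<Longrightarrow> lattice_pt x \<Longrightarrow> lattice_pt (k *\<^sub>R x)"
  by (simp add: lattice_pt_def)
lemma lat_zero: "lattice_pt 0"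
  by (simp add: lattice_pt_def)

lemma cross_int: "lattice_pt a \<Longrightarrow> lattice_pt b \<Longrightarrow> lattice_pt (cross3 a b)"
  unfolding lattice_pt_def cross3_def
  by (auto simp: forall_3 vector_3 intro!: Ints_diff Ints_mult)

lemma inner_int: "lattice_pt (a::real^3) \<Longrightarrow> lattice_pt b \<Longrightarrow> a \<bullet> b \<in> \<int>"
  unfolding lattice_pt_def inner_vec_def
  by (auto simp: sum_3 intro!: Ints_add Ints_mult)

lemma decomp:
  fixes a b x :: "real^3"
  defines "n \<equiv> cross3 a b"
  shows "(n \<bullet> n) *\<^sub>R x = ((cross3 x b) \<bullet> n) *\<^sub>R a + ((cross3 a x) \<bullet> n) *\<^sub>R b + (n \<bullet> x) *\<^sub>R n"
  unfolding n_def cross3_def inner_vec_def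
  by (simp add: vec_eq_iff forall_3 sum_3 vector_3; simp add: algebra_simps)

lemma n_a: "cross3 a b \<bullet> a = 0" and n_b: "cross3 a b \<bullet> b = 0"
  by (simp_all add: dot_cross_self inner_commute)

lemma plane_decomp:
  fixes a b x :: "real^3"
  assumes "cross3 a b \<noteq> 0" "cross3 a b \<bullet> x = 0"
  shows "\<exists>\<alpha> \<beta>. x = \<alpha> *\<^sub>R a + \<beta> *\<^sub>R b"
proof -
  let ?n = "cross3 a b"
  have nn: "?n \<bullet> ?n \<noteq> 0" using assms(1) by simp
  have "(?n \<bullet> ?n) *\<^sub>R x = ((cross3 x b) \<bullet> ?n) *\<^sub>R a + ((cross3 a x) \<bullet> ?n) *\<^sub>R b"
    using decomp[of a b x] assms(2) by simp
  moreover have "x = (1 / (?n \<bullet> ?n)) *\<^sub>R ((?n \<bullet> ?n) *\<^sub>R x)" using nn by simp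
  ultimately have "x = (1 / (?n \<bullet> ?n)) *\<^sub>R (((cross3 x b) \<bullet> ?n) *\<^sub>R a + ((cross3 a x) \<bullet> ?n) *\<^sub>R b)"
    by simp
  then have "x = (((cross3 x b) \<bullet> ?n) / (?n \<bullet> ?n)) *\<^sub>R a + (((cross3 a x) \<bullet> ?n) / (?n \<bullet> ?n)) *\<^sub>R b"
    by (simp add: scaleR_add_right)
  then show ?thesis by blast
qed

lemma finite_lattice_bounded:
  fixes B :: "(real^3) set"
  assumes "bounded B"
  shows "finite {x \<in> B. lattice_pt x}"
proof -
  obtain r where r: "\<And>x. x \<in> B \<Longrightarrow> norm x \<le> r"
    using assms bounded_iff by blast
  define R where "R = \<lceil>r\<rceil>"
  let ?g = "\<lambda>x::real^3. (\<lfloor>x$1\<rfloor>, \<lfloor>x$2\<rfloor>, \<lfloor>x$3\<rfloor>)"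
  let ?A = "{x \<in> B. lattice_pt x}"
  have inj: "inj_on ?g ?A"
  proof
    fix x y assume x: "x \<in> ?A" and y: "y \<in> ?A" and e: "?g x = ?g y"
    have xi: "\<And>i. x$i \<in> \<int>" and yi: "\<And>i. y$i \<in> \<int>" using x y by (auto simp: lattice_pt_def)
    have fx: "\<And>i. of_int \<lfloor>x$i\<rfloor> = x$i" using xi by (metis Ints_cases floor_of_int)
    have fy: "\<And>i. of_int \<lfloor>y$i\<rfloor> = y$i" using yi by (metis Ints_cases floor_of_int)
    have "\<lfloor>x$1\<rfloor> = \<lfloor>y$1\<rfloor>" "\<lfloor>x$2\<rfloor> = \<lfloor>y$2\<rfloor>" "\<lfloor>x$3\<rfloor> = \<lfloor>y$3\<rfloor>" using e by auto
    then have "x$1 = y$1" "x$2 = y$2" "x$3 = y$3" by (metis fx fy)+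
    then show "x = y" by (simp add: vec_eq_iff forall_3)
  qed
  have sub: "?g ` ?A \<subseteq> Sigma {-R..R} (\<lambda>_. Sigma {-R..R} (\<lambda>_. {-R..R}))"
  proof
    fix z assume "z \<in> ?g ` ?A"
    then obtain x where x: "x \<in> B" "z = ?g x" by auto
    have "\<And>i. \<bar>x$i\<bar> \<le> r" using r[OF x(1)] component_le_norm_cart order_trans by blast
    moreover have "r \<le> of_int R" unfolding R_def by (rule le_of_int_ceiling)
    ultimately have xb: "\<And>i. \<bar>x$i\<bar> \<le> of_int R" by (meson order_trans)
    have "\<And>i. -R \<le> \<lfloor>x$i\<rfloor> \<and> \<lfloor>x$i\<rfloor> \<le> R"
    proof -
      fix i
      have "- of_int R \<le> x$i" "x$i \<le> of_int R" using xb[of i] by auto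
      then show "-R \<le> \<lfloor>x$i\<rfloor> \<and> \<lfloor>x$i\<rfloor> \<le> R"
        by (metis floor_mono floor_of_int of_int_minus)
    qed
    then show "z \<in> Sigma {-R..R} (\<lambda>_. Sigma {-R..R} (\<lambda>_. {-R..R}))" using x by auto
  qed
  have "finite (?g ` ?A)" by (rule finite_subset[OF sub]) auto
  then show ?thesis using finite_imageD inj by blast
qed

lemma zero_interior_idx:
  fixes y :: "nat \<Rightarrow> real^3"
  assumes I: "finite I" and w: "\<And>i. i \<in> I \<Longrightarrow> w i > 0"
    and s: "(\<Sum>i\<in>I. w i *\<^sub>R y i) = 0" and sp: "span (y ` I) = UNIV"
  shows "0 \<in> interior (convex hull (y ` I))"
proof -
  have Ine: "I \<noteq> {}" using sp by auto
  define W where "W x = (\<Sum>i\<in>{i\<in>I. y i = x}. w i)" for x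
  have Wp: "W x > 0" if xI: "x \<in> y ` I" for x
  proof -
    obtain i where "i \<in> I" "y i = x" using xI by auto
    then have ne: "{i\<in>I. y i = x} \<noteq> {}" by auto
    show ?thesis unfolding W_def using I ne w by (intro sum_pos) auto
  qed
  have sum1: "(\<Sum>x\<in>y ` I. W x *\<^sub>R x) = 0"
  proof -
    have "(\<Sum>i\<in>I. w i *\<^sub>R y i) = (\<Sum>x\<in>y ` I. \<Sum>i\<in>{i\<in>I. y i = x}. w i *\<^sub>R y i)"
      by (rule sum.image_gen[OF I])
    also have "\<dots> = (\<Sum>x\<in>y ` I. W x *\<^sub>R x)"
      unfolding W_def by (intro sum.cong refl) (simp add: scaleR_sum_left)
    finally show ?thesis using s by simp
  qed
  define t where "t = (\<Sum>x\<in>y ` I. W x)"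
  have tp: "t > 0" unfolding t_def using I Ine Wp by (intro sum_pos) auto
  define U where "U x = W x / t" for x
  have "0 \<in> {z. \<exists>u. (\<forall>x \<in> y ` I. 0 < u x) \<and> sum u (y ` I) = 1 \<and> (\<Sum>x\<in>y ` I. u x *\<^sub>R x) = z}"
  proof (intro CollectI exI[of _ U] conjI ballI)
    show "0 < U x" if "x \<in> y ` I" for x using Wp[OF that] tp by (simp add: U_def)
    show "sum U (y ` I) = 1" unfolding U_def using tp by (simp add: sum_divide_distrib[symmetric] t_def)
    show "(\<Sum>x\<in>y ` I. U x *\<^sub>R x) = 0"
      unfolding U_def using sum1 by (simp add: divide_inverse scaleR_sum_right[symmetric] mult.commute flip: scaleR_scaleR)
  qed
  then have "0 \<in> rel_interior (convex hull (y ` I))"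
    using explicit_subset_rel_interior_convex_hull_minimal[of "y ` I"] I by blast
  moreover have "0 \<in> affine hull (y ` I)"
    using calculation convex_hull_subset_affine_hull rel_interior_subset by blast
  then have "affine hull (convex hull (y ` I)) = UNIV"
    using affine_hull_span_0 sp by (metis affine_hull_convex_hull)
  ultimately show ?thesis using rel_interior_interior by blast
qed

lemma removal:
  assumes mf: "minimal_fano P" and rho: "\<rho> extreme_point_of P"
    and S: "finite S" "S \<subseteq> {x \<in> P. lattice_pt x}" "\<rho> \<notin> S"
    and z: "0 \<in> interior (convex hull S)"
  shows False
proof -
  have fp: "fano_polytope P" using mf minimal_fano_def by blast
  then have pp: "polytope P" and intP: "{x \<in> interior P. lattice_pt x} = {0}"
    by (auto simp: fano_polytope_def)
  let ?L = "{x \<in> P. lattice_pt x} - {\<rho>}"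
  let ?H = "convex hull ?L"
  have fin: "finite ?L" using finite_lattice_bounded[OF polytope_imp_bounded[OF pp]] by auto
  have SL: "S \<subseteq> ?L" using S by auto
  have HP: "?H \<subseteq> P" by (rule hull_minimal) (use polytope_imp_convex[OF pp] in auto)
  have zH: "0 \<in> interior ?H" using z interior_mono hull_mono[OF SL] by blast
  have "fano_polytope ?H"
    unfolding fano_polytope_def
  proof (intro conjI allI impI)
    show "polytope ?H" using fin polytope_convex_hull by blast
    show "aff_dim ?H = 3" using aff_dim_nonempty_interior[of ?H] zH by auto
    show "lattice_pt v" if "v extreme_point_of ?H" for v
      using extreme_point_of_convex_hull[OF that] by auto
    show "{x \<in> interior ?H. lattice_pt x} = {0}"
      using interior_mono[OF HP] intP zH lat_zero by auto
  qed
  then show False using mf rho minimal_fano_def by blast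
qed

lemma span_all:
  fixes a b u :: "real^3"
  assumes n: "cross3 a b \<noteq> 0" and u: "cross3 a b \<bullet> u \<noteq> 0" and S: "{a, b, u} \<subseteq> S"
  shows "span S = UNIV"
proof -
  let ?n = "cross3 a b"
  have sa: "a \<in> span S" "b \<in> span S" "u \<in> span S" using S span_base by auto
  have du: "(?n \<bullet> ?n) *\<^sub>R u = ((cross3 u b) \<bullet> ?n) *\<^sub>R a + ((cross3 a u) \<bullet> ?n) *\<^sub>R b + (?n \<bullet> u) *\<^sub>R ?n"
    by (rule decomp)
  then have "(?n \<bullet> u) *\<^sub>R ?n = (?n \<bullet> ?n) *\<^sub>R u - ((cross3 u b) \<bullet> ?n) *\<^sub>R a - ((cross3 a u) \<bullet> ?n) *\<^sub>R b"
    by (simp add: algebra_simps)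
  moreover have "(?n \<bullet> ?n) *\<^sub>R u - ((cross3 u b) \<bullet> ?n) *\<^sub>R a - ((cross3 a u) \<bullet> ?n) *\<^sub>R b \<in> span S"
    using sa by (intro span_diff span_scale) auto
  ultimately have "(?n \<bullet> u) *\<^sub>R ?n \<in> span S" by simp
  then have "(1 / (?n \<bullet> u)) *\<^sub>R ((?n \<bullet> u) *\<^sub>R ?n) \<in> span S" by (rule span_scale)
  then have nS: "?n \<in> span S" using u by simp
  have "x \<in> span S" for x
  proof -
    have "(?n \<bullet> ?n) *\<^sub>R x = ((cross3 x b) \<bullet> ?n) *\<^sub>R a + ((cross3 a x) \<bullet> ?n) *\<^sub>R b + (?n \<bullet> x) *\<^sub>R ?n"
      by (rule decomp)
    also have "\<dots> \<in> span S" using sa nS by (intro span_add span_scale) auto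
    finally have "(1 / (?n \<bullet> ?n)) *\<^sub>R ((?n \<bullet> ?n) *\<^sub>R x) \<in> span S" by (rule span_scale)
    then show ?thesis using n by simp
  qed
  then show ?thesis by auto
qed

lemma zi5:
  fixes a b u v :: "real^3"
  assumes n: "cross3 a b \<noteq> 0" and u: "cross3 a b \<bullet> u > 0" and v: "cross3 a b \<bullet> v < 0"
  shows "0 \<in> interior (convex hull {a, b, -a-b, u, v})"
proof -
  let ?n = "cross3 a b"
  define s where "s = ?n \<bullet> u"
  define t where "t = - (?n \<bullet> v)"
  have sp: "s > 0" and tp: "t > 0" using u v by (auto simp: s_def t_def)
  have "?n \<bullet> (t *\<^sub>R u + s *\<^sub>R v) = 0" by (simp add: inner_add_right inner_diff_right s_def t_def)
  then obtain \<alpha> \<beta> where ab: "t *\<^sub>R u + s *\<^sub>R v = \<alpha> *\<^sub>R a + \<beta> *\<^sub>R b"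
    using plane_decomp[OF n] by blast
  define K where "K = \<bar>\<alpha>\<bar> + \<bar>\<beta>\<bar> + 1"
  define y :: "nat \<Rightarrow> real^3" where
    "y i = (if i = 0 then a else if i = 1 then b else if i = 2 then -a-b else if i = 3 then u else v)" for i
  define w :: "nat \<Rightarrow> real" where
    "w i = (if i = 0 then K - \<alpha> else if i = 1 then K - \<beta> else if i = 2 then K else if i = 3 then t else s)" for i
  have img: "y ` {0,1,2,3,4} = {a, b, -a-b, u, v}" by (simp add: y_def insert_commute)
  have "0 \<in> interior (convex hull (y ` {0,1,2,3,4}))"
  proof (rule zero_interior_idx)
    show "finite {0::nat,1,2,3,4}" by simp
    show "\<And>i. i \<in> {0,1,2,3,4} \<Longrightarrow> 0 < w i"
      using sp tp by (auto simp: w_def K_def)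
    have "(\<Sum>i\<in>{0::nat,1,2,3,4}. w i *\<^sub>R y i) = (K - \<alpha>) *\<^sub>R a + (K - \<beta>) *\<^sub>R b + K *\<^sub>R (-a-b) + t *\<^sub>R u + s *\<^sub>R v"
      by (simp add: w_def y_def algebra_simps)
    also have "\<dots> = (t *\<^sub>R u + s *\<^sub>R v) - (\<alpha> *\<^sub>R a + \<beta> *\<^sub>R b)"
      by (simp add: algebra_simps)
    also have "\<dots> = 0" using ab by simp
    finally show "(\<Sum>i\<in>{0::nat,1,2,3,4}. w i *\<^sub>R y i) = 0" .
    show "span (y ` {0,1,2,3,4}) = UNIV"
      unfolding img by (rule span_all[OF n, of u]) (use u in auto)
  qed
  then show ?thesis using img by simp
qed

definition up3 :: "int \<Rightarrow> int \<Rightarrow> int \<Rightarrow> bool" where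
  "up3 A B m \<longleftrightarrow> A + B \<le> m - 1 \<and> A - 2*B \<le> m - 1 \<and> B - 2*A \<le> m - 1"

lemma comb0:
  fixes i j m :: int
  assumes "0 \<le> i" "i < m" "0 \<le> j" "j < m"
  shows "up3 i j m \<or> up3 (m-1-i) (m-1-j) m"
proof (cases "i + j \<le> m - 1")
  case True
  then have "up3 i j m" using assms unfolding up3_def by presburger
  then show ?thesis by blast
next
  case False
  then have "up3 (m-1-i) (m-1-j) m" using assms unfolding up3_def by presburger
  then show ?thesis by blast
qed

lemma comb:
  fixes i j m :: int
  assumes m: "m > 0"
  shows "(\<exists>k1 k2. up3 (i + k1*m) (j + k2*m) m) \<or> (\<exists>k1 k2. up3 (-i + k1*m - 1) (-j + k2*m - 1) m)"
proof -
  have ei: "i = (i div m) * m + i mod m" and ej: "j = (j div m) * m + j mod m" by simp_all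
  have "0 \<le> i mod m" "i mod m < m" "0 \<le> j mod m" "j mod m < m" using m by simp_all
  then have c: "up3 (i mod m) (j mod m) m \<or> up3 (m-1-i mod m) (m-1-j mod m) m" by (rule comb0)
  have 1: "i + (- (i div m))*m = i mod m" "j + (- (j div m))*m = j mod m"
    using ei ej by (simp_all add: algebra_simps)
  have 2: "-i + (i div m + 1)*m - 1 = m-1-i mod m" "-j + (j div m + 1)*m - 1 = m-1-j mod m"
    using ei ej by (simp_all add: algebra_simps)
  show ?thesis using c 1 2 by metis
qed

lemma convex4:
  fixes K :: "(real^3) set"
  assumes "convex K" "p1 \<in> K" "p2 \<in> K" "p3 \<in> K" "p4 \<in> K"
    "w1 \<ge> 0" "w2 \<ge> 0" "w3 \<ge> 0" "w4 \<ge> 0" "w1 + w2 + w3 + w4 = 1"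
  shows "w1 *\<^sub>R p1 + w2 *\<^sub>R p2 + w3 *\<^sub>R p3 + w4 *\<^sub>R p4 \<in> K"
proof -
  define y :: "nat \<Rightarrow> real^3" where "y i = (if i = 0 then p1 else if i = 1 then p2 else if i = 2 then p3 else p4)" for i
  define w :: "nat \<Rightarrow> real" where "w i = (if i = 0 then w1 else if i = 1 then w2 else if i = 2 then w3 else w4)" for i
  have "(\<Sum>i\<in>{0::nat,1,2,3}. w i *\<^sub>R y i) \<in> K"
    by (rule convex_sum) (use assms in \<open>auto simp: w_def y_def add.assoc\<close>)
  then show ?thesis by (simp add: w_def y_def add.assoc)
qed

lemma memQ:
  fixes a b z :: "real^3" and A B m :: int
  assumes m: "m > 0" and u: "up3 A B m" and K: "convex K" "a \<in> K" "b \<in> K" "-a-b \<in> K" "z \<in> K"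
  shows "(of_int A / of_int m) *\<^sub>R a + (of_int B / of_int m) *\<^sub>R b + (1 / of_int m) *\<^sub>R z \<in> K"
proof -
  define M where "M = (of_int m :: real)"
  have Mp: "M > 0" using m by (simp add: M_def)
  define wa where "wa = (2 * of_int A - of_int B + M - 1) / (3 * M)"
  define wb where "wb = (2 * of_int B - of_int A + M - 1) / (3 * M)"
  define wc where "wc = (M - 1 - of_int A - of_int B) / (3 * M)"
  have ci: "A + B \<le> m - 1" "A - 2*B \<le> m - 1" "B - 2*A \<le> m - 1" using u up3_def by auto
  have c1: "real_of_int (A + B) \<le> real_of_int (m - 1)" using ci(1) by (simp only: of_int_le_iff)
  have c2: "real_of_int (A - 2*B) \<le> real_of_int (m - 1)" using ci(2) by (simp only: of_int_le_iff)
  have c3: "real_of_int (B - 2*A) \<le> real_of_int (m - 1)" using ci(3) by (simp only: of_int_le_iff)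
  have c: "of_int A + of_int B \<le> M - 1" "of_int A - 2 * of_int B \<le> M - 1" "of_int B - 2 * of_int A \<le> M - 1"
    using c1 c2 c3 unfolding M_def by simp_all
  have w: "wa \<ge> 0" "wb \<ge> 0" "wc \<ge> 0" "1 / M \<ge> 0"
    using c Mp by (simp_all add: wa_def wb_def wc_def)
  have s: "wa + wb + wc + 1 / M = 1" using Mp by (simp add: wa_def wb_def wc_def field_simps)
  have "wa *\<^sub>R a + wb *\<^sub>R b + wc *\<^sub>R (-a-b) + (1 / M) *\<^sub>R z \<in> K"
    by (rule convex4) (use K w s in auto)
  moreover have "wa *\<^sub>R a + wb *\<^sub>R b + wc *\<^sub>R (-a-b) + (1 / M) *\<^sub>R z
     = (of_int A / of_int m) *\<^sub>R a + (of_int B / of_int m) *\<^sub>R b + (1 / of_int m) *\<^sub>R z"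
  proof -
    have "wa - wc = of_int A / M" "wb - wc = of_int B / M"
      using Mp by (simp_all add: wa_def wb_def wc_def field_simps)
    then show ?thesis by (simp add: M_def algebra_simps flip: scaleR_diff_left)
  qed
  ultimately show ?thesis by simp
qed

lemma zi5':
  fixes a b u v :: "real^3"
  assumes n: "cross3 a b \<noteq> 0" and uv: "(cross3 a b \<bullet> u) * (cross3 a b \<bullet> v) < 0"
  shows "0 \<in> interior (convex hull {a, b, -a-b, u, v})"
proof (cases "cross3 a b \<bullet> u > 0")
  case True
  then have "cross3 a b \<bullet> v < 0" using uv by (simp add: mult_less_0_iff)
  then show ?thesis using zi5[OF n True] by blast
next
  case False
  then have u: "cross3 a b \<bullet> u < 0" and v: "cross3 a b \<bullet> v > 0" using uv by (auto simp: mult_less_0_iff)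
  have "{a, b, -a-b, v, u} = {a, b, -a-b, u, v}" by auto
  then show ?thesis using zi5[OF n v u] by simp
qed

locale cfg =
  fixes P :: "(real^3) set" and a b d :: "real^3"
  assumes mf: "minimal_fano P"
    and la: "lattice_pt a" and lb: "lattice_pt b" and ld: "lattice_pt d"
    and n: "cross3 a b \<noteq> 0"
    and Lstr: "\<And>x. lattice_pt x \<Longrightarrow> cross3 a b \<bullet> x = 0 \<Longrightarrow> \<exists>i j. i \<in> \<int> \<and> j \<in> \<int> \<and> x = i *\<^sub>R a + j *\<^sub>R b"
    and ea: "a extreme_point_of P" and eb: "b extreme_point_of P" and ec: "(-a-b) extreme_point_of P"
    and ed: "d extreme_point_of P" and ee: "(a+b-d) extreme_point_of P"
    and nd: "cross3 a b \<bullet> d \<noteq> 0"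
begin

lemma inP: "a \<in> P" "b \<in> P" "-a-b \<in> P" "d \<in> P" "a+b-d \<in> P"
  using ea eb ec ed ee by (auto simp: extreme_point_of_def)

lemma lat5: "lattice_pt (-a-b)" "lattice_pt (a+b-d)"
  using la lb ld by (auto intro: lat_add lat_diff lat_neg)

lemma nvals: "cross3 a b \<bullet> a = 0" "cross3 a b \<bullet> b = 0" "cross3 a b \<bullet> (-a-b) = 0"
  "cross3 a b \<bullet> (a+b-d) = - (cross3 a b \<bullet> d)"
  by (simp_all add: n_a n_b inner_diff_right inner_add_right)

lemma fanoP: "fano_polytope P" using mf minimal_fano_def by blast

lemma polyP: "polytope P" using fanoP fano_polytope_def by blast

lemma zQ: "0 \<in> interior (convex hull {a, b, -a-b, d, a+b-d})"
  by (rule zi5'[OF n]) (use nd in \<open>simp add: nvals zero_less_mult_iff; linarith\<close>)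

lemma PQ: "P = convex hull {a, b, -a-b, d, a+b-d}"
proof -
  let ?S = "{a, b, -a-b, d, a+b-d}"
  have SP: "?S \<subseteq> {x \<in> P. lattice_pt x}" using inP la lb ld lat5 by auto
  have ext: "\<rho> \<in> ?S" if "\<rho> extreme_point_of P" for \<rho>
  proof (rule ccontr)
    assume "\<rho> \<notin> ?S"
    then show False using removal[OF mf that _ SP _ zQ] by simp
  qed
  have "P = convex hull {x. x extreme_point_of P}"
    using Krein_Milman_Minkowski polytope_imp_compact polytope_imp_convex polyP by blast
  also have "\<dots> \<subseteq> convex hull ?S" using ext by (intro hull_mono) auto
  finally have "P \<subseteq> convex hull ?S" .
  moreover have "convex hull ?S \<subseteq> P"
    using SP polytope_imp_convex[OF polyP] by (intro hull_minimal) auto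
  ultimately show ?thesis by blast
qed

end

context cfg begin

lemma nint: "lattice_pt x \<Longrightarrow> cross3 a b \<bullet> x \<in> \<int>"
  using inner_int[OF cross_int[OF la lb]] by blast

lemma no_sub:
  assumes X: "lattice_pt X" "X \<in> P" and r: "r > 1" and nX: "cross3 a b \<bullet> X = (cross3 a b \<bullet> d) / r"
  shows False
proof -
  let ?S = "{a, b, -a-b, X, a+b-d}"
  let ?D = "cross3 a b \<bullet> d"
  have sq: "?D * ?D > 0" using nd by (metis not_real_square_gt_zero)
  have pos: "(?D * ?D) / r > 0" using sq r by (intro divide_pos_pos) auto
  have "?D / r * (- ?D) = - ((?D * ?D) / r)" by simp
  then have "?D / r * (- ?D) < 0" using pos by linarith
  then have z: "0 \<in> interior (convex hull ?S)" using zi5'[OF n] nX nvals by simp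
  have SP: "?S \<subseteq> {x \<in> P. lattice_pt x}" using inP la lb X lat5 by auto
  have "?D \<noteq> ?D / r" using nd r by (simp add: field_simps)
  then have "d \<noteq> X" using nX by auto
  moreover have "cross3 a b \<bullet> (a+b-d) \<noteq> ?D" using nd nvals(4) by simp
  then have "d \<noteq> a+b-d" by metis
  moreover have "d \<noteq> a" "d \<noteq> b" "d \<noteq> -a-b" using nd nvals by metis+
  ultimately have "d \<notin> ?S" by simp
  then show False using removal[OF mf ed _ SP _ z] by simp
qed

lemma no_sub2:
  assumes X: "lattice_pt X" "X \<in> P" and r: "r > 1" and nX: "cross3 a b \<bullet> X = - (cross3 a b \<bullet> d) / r"
  shows False
proof -
  let ?S = "{a, b, -a-b, d, X}"
  let ?D = "cross3 a b \<bullet> d"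
  have sq: "?D * ?D > 0" using nd by (metis not_real_square_gt_zero)
  have pos: "(?D * ?D) / r > 0" using sq r by (intro divide_pos_pos) auto
  have "?D * (- ?D / r) = - ((?D * ?D) / r)" by simp
  then have "?D * (- ?D / r) < 0" using pos by linarith
  then have z: "0 \<in> interior (convex hull ?S)" using zi5'[OF n] nX nvals by simp
  have SP: "?S \<subseteq> {x \<in> P. lattice_pt x}" using inP la lb ld X lat5 by auto
  have "- ?D \<noteq> - ?D / r" using nd r by (simp add: field_simps)
  then have "a+b-d \<noteq> X" using nX nvals by auto
  moreover have "cross3 a b \<bullet> (a+b-d) \<noteq> ?D" using nd nvals(4) by simp
  then have "d \<noteq> a+b-d" by metis
  moreover have ne0: "cross3 a b \<bullet> (a+b-d) \<noteq> 0" using nd nvals(4) by simp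
  then have "a+b-d \<noteq> a" "a+b-d \<noteq> b" "a+b-d \<noteq> -a-b" using nvals(1-3) by metis+
  ultimately have "a+b-d \<notin> ?S" by auto
  then show False using removal[OF mf ee _ SP _ z] by simp
qed

end

lemma inv_scale: "m \<noteq> 0 \<Longrightarrow> m *\<^sub>R x = p \<Longrightarrow> x = (1/m) *\<^sub>R (p::real^3)"
  by auto

context cfg begin

lemma divall:
  assumes x1: "lattice_pt x1"
  shows "(cross3 a b \<bullet> x1) / (cross3 a b \<bullet> d) \<in> \<int>"
proof (rule ccontr)
  assume nx1: "(cross3 a b \<bullet> x1) / (cross3 a b \<bullet> d) \<notin> \<int>"
  let ?n = "cross3 a b"
  define D where "D = ?n \<bullet> d"
  define G where "G = {k::nat. 0 < k \<and> (\<exists>x. lattice_pt x \<and> ?n \<bullet> x = real k)}"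
  obtain kd :: int where kd: "D = of_int kd" using nint[OF ld] D_def Ints_cases by metis
  have kd0: "kd \<noteq> 0" using nd kd D_def by auto
  have "nat \<bar>kd\<bar> \<in> G"
  proof (cases "kd > 0")
    case True
    then show ?thesis unfolding G_def using ld kd D_def by (intro CollectI conjI exI[of _ d]) auto
  next
    case False
    then have "?n \<bullet> (-d) = real (nat \<bar>kd\<bar>)" using kd D_def kd0 by simp
    then show ?thesis unfolding G_def using lat_neg[OF ld] kd0 by auto
  qed
  then have GE: "\<exists>k. k \<in> G" by blast
  define g where "g = (LEAST k. k \<in> G)"
  have gG: "g \<in> G" unfolding g_def by (rule LeastI_ex[OF GE])
  then obtain xg where xg: "lattice_pt xg" "?n \<bullet> xg = real g" and gp: "g > 0" unfolding G_def by auto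
  have mult: "\<exists>q::int. ?n \<bullet> x = of_int q * real g" if x: "lattice_pt x" for x
  proof -
    obtain k :: int where k: "?n \<bullet> x = of_int k" using nint[OF x] Ints_cases by metis
    define q where "q = k div int g"
    define r where "r = k mod int g"
    have kqr: "k = q * int g + r" unfolding q_def r_def by simp
    have r0: "0 \<le> r" "r < int g" using gp unfolding r_def by simp_all
    have lx': "lattice_pt (x - of_int q *\<^sub>R xg)" using x xg(1) by (intro lat_diff lat_scale) auto
    have nx': "?n \<bullet> (x - of_int q *\<^sub>R xg) = of_int r"
      using k xg(2) kqr by (simp add: inner_diff_right)
    have "r = 0"
    proof (rule ccontr)
      assume "r \<noteq> 0"
      then have "nat r \<in> G" unfolding G_def using lx' nx' r0 by auto
      moreover have "nat r < g" using r0 by linarith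
      ultimately show False using not_less_Least g_def by blast
    qed
    then show ?thesis using k kqr by auto
  qed
  obtain qD :: int where qD: "D = of_int qD * real g" using mult[OF ld] D_def by blast
  have qD0: "qD \<noteq> 0" using qD nd D_def by auto
  have "\<bar>qD\<bar> \<noteq> 1"
  proof
    assume q1: "\<bar>qD\<bar> = 1"
    obtain q where q: "?n \<bullet> x1 = of_int q * real g" using mult[OF x1] by blast
    have "real g = of_int qD * D" using q1 qD by (cases "qD \<ge> 0") auto
    then have "(?n \<bullet> x1) / D = of_int (q * qD)" using q nd D_def by (simp add: field_simps)
    then show False using nx1 D_def by (metis Ints_of_int)
  qed
  then have m2: "\<bar>qD\<bar> \<ge> 2" using qD0 by linarith
  define m where "m = \<bar>qD\<bar>"
  define x0 where "x0 = of_int (sgn qD) *\<^sub>R xg"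
  have lx0: "lattice_pt x0" unfolding x0_def using xg(1) by (intro lat_scale) auto
  have nx0: "?n \<bullet> x0 = of_int (sgn qD) * real g" unfolding x0_def using xg(2) by simp
  have mD: "of_int m * (?n \<bullet> x0) = D" unfolding m_def nx0 qD
    by (metis (mono_tags, opaque_lifting) abs_mult_sgn mult.assoc of_int_mult)
  have Dm: "?n \<bullet> x0 = D / of_int m" using mD m2 m_def by (simp add: field_simps)
  have ly: "lattice_pt (of_int m *\<^sub>R x0 - d)" using lx0 ld by (intro lat_diff lat_scale) auto
  have "?n \<bullet> (of_int m *\<^sub>R x0 - d) = 0" using mD D_def by (simp add: inner_diff_right)
  then obtain i j where ij: "i \<in> \<int>" "j \<in> \<int>" "of_int m *\<^sub>R x0 - d = i *\<^sub>R a + j *\<^sub>R b"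
    using Lstr[OF ly] by blast
  obtain ii jj :: int where iijj: "i = of_int ii" "j = of_int jj" using ij(1,2) Ints_cases by metis
  have mx0: "of_int m *\<^sub>R x0 = of_int ii *\<^sub>R a + of_int jj *\<^sub>R b + d" using ij(3) iijj by (simp add: algebra_simps)
  have mpos: "m > 0" "real_of_int m > 1" using m2 m_def by auto
  have x0e: "x0 = (1 / of_int m) *\<^sub>R (of_int ii *\<^sub>R a + of_int jj *\<^sub>R b + d)"
    using inv_scale[OF _ mx0] mpos by simp
  have convP: "convex P" using polytope_imp_convex[OF polyP] .
  from comb[OF mpos(1), of ii jj] show False
  proof
    assume "\<exists>k1 k2. up3 (ii + k1*m) (jj + k2*m) m"
    then obtain k1 k2 where u: "up3 (ii + k1*m) (jj + k2*m) m" by blast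
    define X where "X = x0 + of_int k1 *\<^sub>R a + of_int k2 *\<^sub>R b"
    have "X = (of_int (ii + k1*m) / of_int m) *\<^sub>R a + (of_int (jj + k2*m) / of_int m) *\<^sub>R b + (1 / of_int m) *\<^sub>R d"
      unfolding X_def x0e using mpos by (simp add: algebra_simps add_divide_distrib scaleR_add_left)
    also have "\<dots> \<in> P" by (rule memQ[OF mpos(1) u convP inP(1,2,3,4)])
    finally have XP: "X \<in> P" .
    have lX: "lattice_pt X" unfolding X_def using lx0 la lb by (intro lat_add lat_scale) auto
    have "?n \<bullet> X = D / of_int m" unfolding X_def using Dm by (simp add: inner_add_right n_a n_b)
    then show False using no_sub[OF lX XP mpos(2)] D_def by simp
  next
    assume "\<exists>k1 k2. up3 (-ii + k1*m - 1) (-jj + k2*m - 1) m"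
    then obtain k1 k2 where u: "up3 (-ii + k1*m - 1) (-jj + k2*m - 1) m" by blast
    define X where "X = - x0 + of_int k1 *\<^sub>R a + of_int k2 *\<^sub>R b"
    have "X = (of_int (-ii + k1*m - 1) / of_int m) *\<^sub>R a + (of_int (-jj + k2*m - 1) / of_int m) *\<^sub>R b + (1 / of_int m) *\<^sub>R (a+b-d)"
      unfolding X_def x0e using mpos by (simp add: algebra_simps add_divide_distrib diff_divide_distrib scaleR_add_left scaleR_diff_left)
    also have "\<dots> \<in> P" by (rule memQ[OF mpos(1) u convP inP(1,2,3,5)])
    finally have XP: "X \<in> P" .
    have lX: "lattice_pt X" unfolding X_def using lx0 la lb by (intro lat_add lat_scale lat_neg) auto
    have "?n \<bullet> X = - D / of_int m" unfolding X_def using Dm by (simp add: inner_add_right inner_diff_right n_a n_b)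
    then show False using no_sub2[OF lX XP mpos(2)] D_def by simp
  qed
qed

end

lemma det_int3:
  fixes A :: "real^3^3"
  assumes "\<forall>i j. A$i$j \<in> \<int>"
  shows "det A \<in> \<int>"
  using assms unfolding det_3 by (intro Ints_add Ints_diff Ints_mult; simp)

lemma Ints_mult_1: "x \<in> \<int> \<Longrightarrow> y \<in> \<int> \<Longrightarrow> x * y = (1::real) \<Longrightarrow> \<bar>x\<bar> = 1"
proof -
  assume "x \<in> \<int>" "y \<in> \<int>" "x * y = 1"
  then obtain i j :: int where "x = of_int i" "y = of_int j" "of_int i * of_int j = (1::real)"
    by (metis Ints_cases)
  then have "i * j = 1" "x = of_int i" by (metis of_int_eq_1_iff of_int_mult)+
  then show ?thesis using zmult_eq_1_iff by fastforce
qed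

context cfg begin

definition Mx :: "real^3^3" where
  "Mx = (\<chi> i j. if j = 1 then a$i else if j = 2 then b$i else - d$i)"

lemma Mv: "Mx *v v = v$1 *\<^sub>R a + v$2 *\<^sub>R b - v$3 *\<^sub>R d"
  by (simp add: vec_eq_iff Mx_def matrix_vector_mult_def sum_3 algebra_simps)

lemma Mint: "\<forall>i j. Mx$i$j \<in> \<int>"
  using la lb ld unfolding Mx_def lattice_pt_def by (simp add: forall_3)

lemma lat_rep: "lattice_pt x \<Longrightarrow> \<exists>z. (\<forall>i. z$i \<in> \<int>) \<and> Mx *v z = x"
proof -
  assume x: "lattice_pt x"
  let ?n = "cross3 a b"
  obtain q where q: "q \<in> \<int>" "(?n \<bullet> x) / (?n \<bullet> d) = q" using divall[OF x] by blast
  have ly: "lattice_pt (x - q *\<^sub>R d)" using x ld q by (intro lat_diff lat_scale) auto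
  have "?n \<bullet> (x - q *\<^sub>R d) = 0" using q nd by (simp add: inner_diff_right field_simps)
  then obtain i j where ij: "i \<in> \<int>" "j \<in> \<int>" "x - q *\<^sub>R d = i *\<^sub>R a + j *\<^sub>R b"
    using Lstr[OF ly] by blast
  let ?z = "vector [i, j, -q] :: real^3"
  have "\<forall>k. ?z$k \<in> \<int>" using ij q by (simp add: forall_3)
  moreover have "Mx *v ?z = x" using ij(3) by (simp add: Mv algebra_simps)
  ultimately show ?thesis by blast
qed

lemma detM: "\<bar>det Mx\<bar> = 1"
proof -
  have "\<forall>k. \<exists>z. (\<forall>i. z$i \<in> \<int>) \<and> Mx *v z = axis k 1"
    by (intro allI lat_rep) (simp add: lattice_pt_def axis_def)
  then obtain Zf where Zf: "\<And>k. (\<forall>i. Zf k $ i \<in> \<int>) \<and> Mx *v Zf k = axis k 1" by metis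
  define Z :: "real^3^3" where "Z = (\<chi> i k. Zf k $ i)"
  have "Mx ** Z = mat 1"
  proof -
    have "(Mx ** Z)$i$k = (mat 1 :: real^3^3)$i$k" for i k
    proof -
      have "(Mx ** Z)$i$k = (Mx *v Zf k)$i"
        by (simp add: matrix_matrix_mult_def matrix_vector_mult_def Z_def)
      also have "\<dots> = axis k 1 $ i" using Zf by simp
      finally show ?thesis by (simp add: mat_def axis_def)
    qed
    then show ?thesis by (simp add: vec_eq_iff)
  qed
  then have "det Mx * det Z = 1" by (metis det_mul det_I)
  moreover have "det Z \<in> \<int>" by (rule det_int3) (use Zf in \<open>simp add: Z_def\<close>)
  ultimately show ?thesis using det_int3[OF Mint] Ints_mult_1 by blast
qed

lemma main: "\<exists>M. GL3Z M \<and> P = (\<lambda>x. M *v x) ` P_model"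
proof (intro exI conjI)
  show "GL3Z Mx" unfolding GL3Z_def using Mint detM by blast
  have "(\<lambda>x. Mx *v x) ` P_model = convex hull ((\<lambda>x. Mx *v x) ` {vector [1,0,0], vector [0,1,0], vector [0,0,-1],
                          vector [-1,-1,0], vector [1,1,1]})"
    unfolding P_model_def by (rule convex_hull_linear_image) (rule matrix_vector_mul_linear)
  also have "(\<lambda>x. Mx *v x) ` {vector [1,0,0], vector [0,1,0], vector [0,0,-1], vector [-1,-1,0], vector [1,1,1]}
     = {a, b, -a-b, d, a+b-d}"
    by (simp add: Mv insert_commute algebra_simps)
  finally show "P = (\<lambda>x. Mx *v x) ` P_model" using PQ by simp
qed

end

lemma cross_rot: "cross3 (a - b) (-a-b-b) = (-3) *\<^sub>R cross3 a b"
  unfolding cross3_def by (simp add: vec_eq_iff forall_3 vector_3; simp add: algebra_simps)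

lemma tri_setup:
  assumes "std_triangle_in T L"
  shows "\<exists>a b. lattice_pt a \<and> lattice_pt b \<and> cross3 a b \<noteq> 0 \<and> L = {x. cross3 a b \<bullet> x = 0} \<and>
    (\<forall>x. lattice_pt x \<and> cross3 a b \<bullet> x = 0 \<longrightarrow> (\<exists>i j. i \<in> \<int> \<and> j \<in> \<int> \<and> x = i *\<^sub>R a + j *\<^sub>R b)) \<and>
    (\<forall>v. v extreme_point_of T \<longleftrightarrow> v \<in> {a, b, -a-b})"
proof -
  obtain f :: "real^2 \<Rightarrow> real^3" where f: "linear f" "inj f" "f ` UNIV = L"
    "f ` {y. lattice_pt y} = {x \<in> L. lattice_pt x}" "f ` std_triangle = T"
    using assms unfolding std_triangle_in_def by blast
  define a where "a = f (vector [1,0])"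
  define b where "b = f (vector [0,1])"
  have fy: "f y = y$1 *\<^sub>R a + y$2 *\<^sub>R b" for y
  proof -
    have "y = y$1 *\<^sub>R vector [1,0] + y$2 *\<^sub>R vector [0,1]" by (simp add: vec_eq_iff forall_2)
    then have "f y = f (y$1 *\<^sub>R vector [1,0] + y$2 *\<^sub>R vector [0,1])" by metis
    also have "\<dots> = y$1 *\<^sub>R a + y$2 *\<^sub>R b" using f(1) by (simp add: a_def b_def linear_add linear_scale)
    finally show ?thesis .
  qed
  have lat2: "lattice_pt (vector [1,0] :: real^2)" "lattice_pt (vector [0,1] :: real^2)"
    by (simp_all add: lattice_pt_def forall_2)
  have la: "lattice_pt a" "a \<in> L" using f(4) lat2(1) unfolding a_def by blast+
  have lb: "lattice_pt b" "b \<in> L" using f(4) lat2(2) unfolding b_def by blast+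
  have f0: "f 0 = 0" by (simp add: fy)
  have key: "y = 0" if "f y = 0" for y using f(2) f0 that by (metis injD)
  have n: "cross3 a b \<noteq> 0"
  proof
    assume "cross3 a b = 0"
    then have "collinear {0, a, b}" using cross_eq_0 by blast
    then have "a = 0 \<or> b = 0 \<or> (\<exists>c. b = c *\<^sub>R a)" using collinear_lemma by blast
    moreover have "a \<noteq> 0"
    proof
      assume "a = 0"
      then have "(vector [1,0] :: real^2) = 0" using key a_def by metis
      then show False by (simp add: vec_eq_iff forall_2)
    qed
    moreover have "b \<noteq> 0"
    proof
      assume "b = 0"
      then have "(vector [0,1] :: real^2) = 0" using key b_def by metis
      then show False by (simp add: vec_eq_iff forall_2)
    qed
    moreover have "b \<noteq> c *\<^sub>R a" for c
    proof
      assume "b = c *\<^sub>R a"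
      then have "f (vector [-c, 1]) = 0" by (simp add: fy)
      then have "(vector [-c,1] :: real^2) = 0" using key by blast
      then show False by (simp add: vec_eq_iff forall_2)
    qed
    ultimately show False by blast
  qed
  have L: "L = {x. cross3 a b \<bullet> x = 0}"
  proof
    show "L \<subseteq> {x. cross3 a b \<bullet> x = 0}"
    proof
      fix x assume "x \<in> L"
      then obtain y where "x = f y" using f(3) by blast
      then show "x \<in> {x. cross3 a b \<bullet> x = 0}" by (simp add: fy inner_add_right n_a n_b)
    qed
    show "{x. cross3 a b \<bullet> x = 0} \<subseteq> L"
    proof
      fix x assume "x \<in> {x. cross3 a b \<bullet> x = 0}"
      then obtain \<alpha> \<beta> where "x = \<alpha> *\<^sub>R a + \<beta> *\<^sub>R b" using plane_decomp[OF n, of x] by auto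
      then have "x = f (vector [\<alpha>, \<beta>])" by (simp add: fy)
      then show "x \<in> L" using f(3) by blast
    qed
  qed
  have Ls: "\<exists>i j. i \<in> \<int> \<and> j \<in> \<int> \<and> x = i *\<^sub>R a + j *\<^sub>R b" if "lattice_pt x" "cross3 a b \<bullet> x = 0" for x
  proof -
    have "x \<in> f ` {y. lattice_pt y}" using f(4) L that by auto
    then obtain z where "lattice_pt z" "x = f z" by auto
    then show ?thesis by (intro exI[of _ "z$1"] exI[of _ "z$2"]) (auto simp: fy lattice_pt_def)
  qed
  have T: "T = convex hull {a, b, -a-b}"
  proof -
    have "f (vector [-1,-1]) = -a-b" by (simp add: fy)
    then have "f ` {vector [1,0], vector [0,1], vector [-1,-1]} = {a, b, -a-b}" by (simp add: a_def b_def)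
    then show ?thesis using f(5) convex_hull_linear_image[OF f(1)] unfolding std_triangle_def by metis
  qed
  have "\<not> collinear {a, b, -a-b}"
  proof
    assume "collinear {a, b, -a-b}"
    then have "collinear {0, a - b, -a-b-b}" by (subst (asm) collinear_3) auto
    then have "cross3 (a - b) (-a-b-b) = 0" by (simp add: cross_eq_0)
    then show False using n cross_rot by simp
  qed
  then have "\<not> affine_dependent {a, b, -a-b}" using collinear_3_eq_affine_dependent by blast
  then have E: "\<forall>v. v extreme_point_of T \<longleftrightarrow> v \<in> {a, b, -a-b}"
    using T extreme_point_of_convex_hull_affine_independent by blast
  show ?thesis using la lb n L Ls E by blast
qed

lemma tri_kill:
  assumes mf: "minimal_fano P" and n: "cross3 a b \<noteq> 0"
    and S: "{a, b, -a-b, u, v} \<subseteq> {x \<in> P. lattice_pt x}"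
    and uv: "(cross3 a b \<bullet> u) * (cross3 a b \<bullet> v) < 0"
    and rho: "\<rho> extreme_point_of P" "\<rho> \<notin> {a, b, -a-b, u, v}"
  shows False
  using removal[OF mf rho(1) _ S rho(2) zi5'[OF n uv]] by simp

lemma cross_r1: "cross3 b (-a-b) = cross3 a b"
  unfolding cross3_def by (simp add: vec_eq_iff forall_3 vector_3; simp add: algebra_simps)
lemma cross_r2: "cross3 (-a-b) a = cross3 a b"
  unfolding cross3_def by (simp add: vec_eq_iff forall_3 vector_3; simp add: algebra_simps)

lemma rot:
  assumes mf: "minimal_fano P" and la: "lattice_pt a" and lb: "lattice_pt b" and ld: "lattice_pt d"
    and n: "cross3 a b \<noteq> 0"
    and Ls: "\<forall>x. lattice_pt x \<and> cross3 a b \<bullet> x = 0 \<longrightarrow> (\<exists>i j. i \<in> \<int> \<and> j \<in> \<int> \<and> x = i *\<^sub>R a + j *\<^sub>R b)"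
    and ea: "a extreme_point_of P" and eb: "b extreme_point_of P" and ec: "(-a-b) extreme_point_of P"
    and w: "w \<in> {a, b, -a-b}" and ed: "d extreme_point_of P" and ee: "(-w-d) extreme_point_of P"
    and nd: "cross3 a b \<bullet> d \<noteq> 0"
  shows "\<exists>M. GL3Z M \<and> P = (\<lambda>x. M *v x) ` P_model"
proof -
  have lc: "lattice_pt (-a-b)" using la lb by (intro lat_diff lat_neg)
  consider "w = -a-b" | "w = a" | "w = b" using w by auto
  then show ?thesis
  proof cases
    case 1
    have Ls': "\<And>x. lattice_pt x \<Longrightarrow> cross3 a b \<bullet> x = 0 \<Longrightarrow> \<exists>i j. i \<in> \<int> \<and> j \<in> \<int> \<and> x = i *\<^sub>R a + j *\<^sub>R b"
      using Ls by blast
    have "-w-d = a + b - d" using 1 by simp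
    then have ee': "(a + b - d) extreme_point_of P" using ee by simp
    have "cfg P a b d" by (rule cfg.intro[OF mf la lb ld n Ls' ea eb ec ed ee' nd])
    then show ?thesis using cfg.main by blast
  next
    case 2
    have Ls': "\<exists>i j. i \<in> \<int> \<and> j \<in> \<int> \<and> x = i *\<^sub>R b + j *\<^sub>R (-a-b)"
      if "lattice_pt x" "cross3 b (-a-b) \<bullet> x = 0" for x
    proof -
      have h: "cross3 a b \<bullet> x = 0" using that(2) cross_r1 by simp
      have "lattice_pt x \<and> cross3 a b \<bullet> x = 0" using that(1) h by simp
      then have "\<exists>i j. i \<in> \<int> \<and> j \<in> \<int> \<and> x = i *\<^sub>R a + j *\<^sub>R b" using spec[OF Ls, of x] by (rule mp[rotated])
      then obtain i j where ij: "i \<in> \<int>" "j \<in> \<int>" "x = i *\<^sub>R a + j *\<^sub>R b" by blast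
      have "x = (j - i) *\<^sub>R b + (-i) *\<^sub>R (-a-b)" using ij(3) by (simp add: algebra_simps)
      then show ?thesis using ij by (intro exI[of _ "j-i"] exI[of _ "-i"]) auto
    qed
    have "- b - (- a - b) = a" by simp
    then have ec': "(- b - (- a - b)) extreme_point_of P" using ea by simp
    have "b + (- a - b) - d = -w-d" using 2 by simp
    then have ee': "(b + (- a - b) - d) extreme_point_of P" using ee by simp
    have n': "cross3 b (-a-b) \<noteq> 0" using n cross_r1 by simp
    have nd': "cross3 b (-a-b) \<bullet> d \<noteq> 0" using nd cross_r1 by simp
    have "cfg P b (-a-b) d" by (rule cfg.intro[OF mf lb lc ld n' Ls' eb ec ec' ed ee' nd'])
    then show ?thesis using cfg.main by blast
  next
    case 3
    have Ls': "\<exists>i j. i \<in> \<int> \<and> j \<in> \<int> \<and> x = i *\<^sub>R (-a-b) + j *\<^sub>R a"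
      if "lattice_pt x" "cross3 (-a-b) a \<bullet> x = 0" for x
    proof -
      have h: "cross3 a b \<bullet> x = 0" using that(2) cross_r2 by simp
      have "lattice_pt x \<and> cross3 a b \<bullet> x = 0" using that(1) h by simp
      then have "\<exists>i j. i \<in> \<int> \<and> j \<in> \<int> \<and> x = i *\<^sub>R a + j *\<^sub>R b" using spec[OF Ls, of x] by (rule mp[rotated])
      then obtain i j where ij: "i \<in> \<int>" "j \<in> \<int>" "x = i *\<^sub>R a + j *\<^sub>R b" by blast
      have "x = (-j) *\<^sub>R (-a-b) + (i - j) *\<^sub>R a" using ij(3) by (simp add: algebra_simps)
      then show ?thesis using ij by (intro exI[of _ "-j"] exI[of _ "i-j"]) auto
    qed
    have "- (- a - b) - a = b" by simp
    then have ec': "(- (- a - b) - a) extreme_point_of P" using eb by simp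
    have "- a - b + a - d = -w-d" using 3 by simp
    then have ee': "(- a - b + a - d) extreme_point_of P" using ee by simp
    have n': "cross3 (-a-b) a \<noteq> 0" using n cross_r2 by simp
    have nd': "cross3 (-a-b) a \<bullet> d \<noteq> 0" using nd cross_r2 by simp
    have "cfg P (-a-b) a d" by (rule cfg.intro[OF mf lc la ld n' Ls' ec ea ec' ed ee' nd'])
    then show ?thesis using cfg.main by blast
  qed
qed

lemma neq_tri:
  fixes p q :: "real^3"
  assumes "cross3 p q \<noteq> 0"
  shows "p \<noteq> q" "p \<noteq> -p-q" "q \<noteq> -p-q"
proof -
  show "p \<noteq> q" using assms by auto
  show "p \<noteq> -p-q"
  proof
    assume h: "p = -p-q"
    have "q = (-2) *\<^sub>R p" using h by (simp add: algebra_simps) (metis add.commute add_diff_cancel_left' diff_add_cancel h minus_diff_eq scaleR_2)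
    then show False using assms by (simp add: cross_mult_right)
  qed
  show "q \<noteq> -p-q"
  proof
    assume h: "q = -p-q"
    have "p = (-2) *\<^sub>R q" using h by (simp add: algebra_simps) (metis add.commute add_diff_cancel_left' diff_add_cancel h minus_diff_eq scaleR_2)
    then show False using assms by (simp add: cross_mult_left)
  qed
qed

theorem lemma4p11:
  fixes P :: "(real^3) set"
  assumes "minimal_fano P"
    and "std_triangle_in T1 L1" and "std_triangle_in T2 L2" and "L1 \<noteq> L2"
    and "\<forall>v. v extreme_point_of T1 \<longrightarrow> v extreme_point_of P"
    and "\<forall>v. v extreme_point_of T2 \<longrightarrow> v extreme_point_of P"
  shows "\<exists>M. GL3Z M \<and> P = (\<lambda>x. M *v x) ` P_model"
proof -
  note mf = assms(1)
  obtain a b where la: "lattice_pt a" and lb: "lattice_pt b" and n1: "cross3 a b \<noteq> 0"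
    and L1: "L1 = {x. cross3 a b \<bullet> x = 0}"
    and Ls1: "\<forall>x. lattice_pt x \<and> cross3 a b \<bullet> x = 0 \<longrightarrow> (\<exists>i j. i \<in> \<int> \<and> j \<in> \<int> \<and> x = i *\<^sub>R a + j *\<^sub>R b)"
    and E1: "\<forall>v. v extreme_point_of T1 \<longleftrightarrow> v \<in> {a, b, -a-b}"
    using tri_setup[OF assms(2)] by blast
  obtain p q where lp: "lattice_pt p" and lq: "lattice_pt q" and n2: "cross3 p q \<noteq> 0"
    and L2: "L2 = {x. cross3 p q \<bullet> x = 0}"
    and E2: "\<forall>v. v extreme_point_of T2 \<longleftrightarrow> v \<in> {p, q, -p-q}"
    using tri_setup[OF assms(3)] by blast
  have ea: "a extreme_point_of P" "b extreme_point_of P" "(-a-b) extreme_point_of P"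
    using E1 assms(5) by auto
  have ep: "p extreme_point_of P" "q extreme_point_of P" "(-p-q) extreme_point_of P"
    using E2 assms(6) by auto
  have lc: "lattice_pt (-a-b)" using la lb by (intro lat_diff lat_neg)
  have lr: "lattice_pt (-p-q)" using lp lq by (intro lat_diff lat_neg)
  have inP: "a \<in> P" "b \<in> P" "-a-b \<in> P" "p \<in> P" "q \<in> P" "-p-q \<in> P"
    using ea ep by (auto simp: extreme_point_of_def)
  define fp where "fp = cross3 a b \<bullet> p"
  define fq where "fq = cross3 a b \<bullet> q"
  have fr: "cross3 a b \<bullet> (-p-q) = - fp - fq" unfolding fp_def fq_def by (simp add: inner_diff_right)
  have f0: "cross3 a b \<bullet> a = 0" "cross3 a b \<bullet> b = 0" "cross3 a b \<bullet> (-a-b) = 0"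
    by (simp_all add: n_a n_b inner_diff_right)
  have dpq: "p \<noteq> q" "p \<noteq> -p-q" "q \<noteq> -p-q" using neq_tri[OF n2] by auto
  have notboth: "\<not> (fp = 0 \<and> fq = 0)"
  proof
    assume h: "fp = 0 \<and> fq = 0"
    have sub: "L2 \<subseteq> L1"
    proof
      fix x assume "x \<in> L2"
      then have "cross3 p q \<bullet> x = 0" using L2 by simp
      then obtain \<alpha> \<beta> where "x = \<alpha> *\<^sub>R p + \<beta> *\<^sub>R q" using plane_decomp[OF n2, of x] by auto
      then show "x \<in> L1" using h L1 unfolding fp_def fq_def by (simp add: inner_add_right)
    qed
    have s: "subspace L1" "dim L1 = 2" "subspace L2" "dim L2 = 2"
      using assms(2,3) unfolding std_triangle_in_def by auto
    have "L2 = L1" using subspace_dim_equal[OF s(3) s(1) sub] s(2,4) by simp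
    then show False using assms(4) by simp
  qed
  have kill: False if "(cross3 a b \<bullet> u) * (cross3 a b \<bullet> v) < 0" "u \<in> {p, q, -p-q}" "v \<in> {p, q, -p-q}"
    "\<rho> \<in> {p, q, -p-q}" "\<rho> \<notin> {a, b, -a-b, u, v}" for u v \<rho>
  proof -
    have S: "{a, b, -a-b, u, v} \<subseteq> {x \<in> P. lattice_pt x}" using that(2,3) inP la lb lc lp lq lr by auto
    have "\<rho> extreme_point_of P" using that(4) ep by auto
    then show False using tri_kill[OF mf n1 S that(1) _ that(5)] by simp
  qed
  have sq: "x * x > 0" if "x \<noteq> 0" for x :: real using that by (metis not_real_square_gt_zero)
  show ?thesis
  proof (cases "fp = 0")
    case True
    then have fq0: "fq \<noteq> 0" using notboth by simp
    have "p \<in> {a, b, -a-b}"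
    proof (rule ccontr)
      assume "p \<notin> {a, b, -a-b}"
      moreover have "(cross3 a b \<bullet> q) * (cross3 a b \<bullet> (-p-q)) < 0"
        using fr True sq[OF fq0] unfolding fq_def by simp
      ultimately show False using kill[of q "-p-q" p] dpq by auto
    qed
    moreover have "-p-q = -p-q" ..
    ultimately show ?thesis
      using rot[OF mf la lb lq n1 Ls1 ea _ ep(2)] ep(3) fq0 unfolding fq_def by blast
  next
    case fp0: False
    show ?thesis
    proof (cases "fq = 0")
      case True
      have "q \<in> {a, b, -a-b}"
      proof (rule ccontr)
        assume "q \<notin> {a, b, -a-b}"
        moreover have "(cross3 a b \<bullet> p) * (cross3 a b \<bullet> (-p-q)) < 0"
          using fr True sq[OF fp0] unfolding fp_def by simp
        ultimately show False using kill[of p "-p-q" q] dpq by auto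
      qed
      moreover have "-q-p = -p-q" by (simp add: algebra_simps)
      then have "(-q-p) extreme_point_of P" using ep(3) by (simp only:)
      ultimately show ?thesis
        using rot[OF mf la lb lp n1 Ls1 ea _ ep(1)] fp0 unfolding fp_def by blast
    next
      case fq0: False
      show ?thesis
      proof (cases "fp + fq = 0")
        case True
        have fr0: "cross3 a b \<bullet> (-p-q) = 0" using fr True by simp
        have "-p-q \<in> {a, b, -a-b}"
        proof (rule ccontr)
          assume "-p-q \<notin> {a, b, -a-b}"
          moreover have "(cross3 a b \<bullet> p) * (cross3 a b \<bullet> q) < 0"
          proof -
            have "fq = - fp" using True by simp
            then show ?thesis using sq[OF fp0] unfolding fp_def fq_def by simp
          qed
          ultimately show False using kill[of p q "-p-q"] dpq by auto
        qed
        moreover have "(-(-p-q)-p) extreme_point_of P" using ep(2) by simp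
        ultimately show ?thesis
          using rot[OF mf la lb lp n1 Ls1 ea _ ep(1)] fp0 unfolding fp_def by blast
      next
        case fr0: False
        have nr: "-p-q \<notin> {a, b, -a-b}" "p \<notin> {a, b, -a-b}" "q \<notin> {a, b, -a-b}"
          using f0 fr fr0 fp0 fq0 unfolding fp_def fq_def by auto
        have "fp * fq \<ge> 0"
        proof (rule ccontr)
          assume "\<not> fp * fq \<ge> 0"
          then show False using kill[of p q "-p-q"] nr dpq unfolding fp_def fq_def by auto
        qed
        moreover have "fp * (- fp - fq) \<ge> 0"
        proof (rule ccontr)
          assume "\<not> fp * (- fp - fq) \<ge> 0"
          then show False using kill[of p "-p-q" q] nr dpq fr unfolding fp_def fq_def by auto
        qed
        moreover have "fp * (- fp - fq) = - (fp * fp) - fp * fq" by (simp add: algebra_simps)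
        ultimately show ?thesis using sq[OF fp0] by linarith
      qed
    qed
  qed
qed


end
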